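(* Let $m,n\ge 1$ and let $A\in\mathbb{R}^{m\times n}$ with rows $a_1,\dots,a_m$ maximize $\beta(A)$ among all $m\times n$ real matrices whose rows all have Euclidean norm $1$. For $i=1,\dots,m$ let $$W_i=\{x\in\{-1,1\}^n : \|Ax\|_\infty = a_i^\top x\}.$$ Then for every $i$ with $\sum_{x\in W_i}x\neq 0$, $$a_i=\frac{\sum_{x\in W_i}x}{\left\|\sum_{x\in W_i}x\right\|_2}.$$
   Context: For $A\in\mathbb{R}^{m\times n}$, $\beta(A)=\frac{1}{2^n}\sum_{x\in\{-1,1\}^n}\|Ax\|_\infty$. The maximum exists by compactness. *)

theory Defs
  imports "HOL-Analysis.Analysis"
begin

definition signvecs :: "(real ^ 'n) set" where
  "signvecs = {x. \<forall>j. x $ j = 1 \<or> x $ j = -1}"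

definition linf_norm :: "real ^ 'm \<Rightarrow> real" where
  "linf_norm y = Max (range (\<lambda>i. \<bar>y $ i\<bar>))"

definition beta :: "real ^ 'n ^ 'm \<Rightarrow> real" where
  "beta A = (\<Sum>x\<in>(signvecs :: (real ^ 'n) set). linf_norm (A *v x)) / 2 ^ CARD('n)"

definition Wset :: "real ^ 'n ^ 'm \<Rightarrow> 'm \<Rightarrow> (real ^ 'n) set" where
  "Wset A i = {x \<in> signvecs. linf_norm (A *v x) = (A $ i) \<bullet> x}"

end

theory Submission
  imports Defs
begin

lemma linf_ge: "\<bar>y $ k\<bar> \<le> linf_norm y"
  unfolding linf_norm_def by (rule Max_ge) auto

lemma linf_ex: "\<exists>k. linf_norm y = \<bar>y $ k\<bar>"
proof -
  have "linf_norm y \<in> range (\<lambda>i. \<bar>y $ i\<bar>)"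
    unfolding linf_norm_def by (rule Max_in) auto
  then show ?thesis by auto
qed

lemma linf_Av: "linf_norm (A *v x) = Max (range (\<lambda>k. \<bar>A $ k \<bullet> x\<bar>))"
  unfolding linf_norm_def by (simp add: matrix_vector_mul_component)

lemma linf_neg: "linf_norm (A *v (- x)) = linf_norm (A *v x)"
  unfolding linf_Av by simp

lemma signvecs_neg: "x \<in> signvecs \<Longrightarrow> - x \<in> signvecs"
  unfolding signvecs_def by auto

lemma finite_signvecs: "finite (signvecs :: (real ^ 'n) set)"
proof -
  have "signvecs \<subseteq> (\<lambda>T. \<chi> j. if j \<in> T then 1 else -1) ` (UNIV :: 'n set set)"
  proof
    fix x :: "real ^ 'n" assume x: "x \<in> signvecs"
    have "x = (\<chi> j. if j \<in> {j. x $ j = 1} then 1 else -1)"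
      using x unfolding signvecs_def by (auto simp: vec_eq_iff)
    then show "x \<in> (\<lambda>T. \<chi> j. if j \<in> T then 1 else -1) ` UNIV" by blast
  qed
  then show ?thesis by (rule finite_subset) simp
qed

lemma sum_neg_reindex:
  "(\<Sum>x\<in>(signvecs :: (real ^ 'n) set). f (- x)) = (\<Sum>x\<in>signvecs. f x)"
proof -
  have "bij_betw uminus (signvecs :: (real ^ 'n) set) signvecs"
    by (rule bij_betwI[where g=uminus]) (auto simp: signvecs_neg)
  then show ?thesis using sum.reindex_bij_betw[of uminus signvecs signvecs f] by (simp add: o_def)
qed

theorem theorem1:
  fixes A :: "real ^ 'n ^ 'm" and i :: 'm
  assumes rows: "\<forall>k. norm (A $ k) = 1"
    and maxim: "\<forall>B :: real ^ 'n ^ 'm. (\<forall>k. norm (B $ k) = 1) \<longrightarrow> beta B \<le> beta A"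
    and nz: "(\<Sum>x\<in>Wset A i. x) \<noteq> 0"
  shows "A $ i = (\<Sum>x\<in>Wset A i. x) /\<^sub>R norm (\<Sum>x\<in>Wset A i. x)"
proof -
  define s where "s = (\<Sum>x\<in>Wset A i. x)"
  define u where "u = s /\<^sub>R norm s"
  define W where "W = Wset A i"
  define S where "S = (signvecs :: (real ^ 'n) set)"
  define B where "B = (\<chi> k. if k = i then u else A $ k)"
  define d where "d x = (u - A $ i) \<bullet> x" for x
  have sn: "s \<noteq> 0" using nz s_def by simp
  have nu: "norm u = 1" using sn unfolding u_def by simp
  have rowsB: "\<forall>k. norm (B $ k) = 1" using rows nu unfolding B_def by auto
  have finS: "finite S" unfolding S_def by (rule finite_signvecs)
  have WS: "W \<subseteq> S" unfolding W_def S_def Wset_def by auto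
  have Wmem: "x \<in> W \<longleftrightarrow> x \<in> S \<and> linf_norm (A *v x) = A $ i \<bullet> x" for x
    unfolding W_def S_def Wset_def by auto
  have Bcomp: "(B *v x) $ k = (if k = i then u \<bullet> x else (A *v x) $ k)" for x k
    unfolding B_def by (simp add: matrix_vector_mul_component)
  define h where "h x = (if x \<in> W then d x else 0) + (if - x \<in> W then d (- x) else 0)" for x
  have key: "linf_norm (B *v x) - linf_norm (A *v x) \<ge> h x" if xS: "x \<in> S" for x
  proof -
    have Bi: "linf_norm (B *v x) \<ge> \<bar>u \<bullet> x\<bar>" using linf_ge[of "B *v x" i] by (simp add: Bcomp)
    have dn: "d (- x) = - d x" unfolding d_def by simp
    have nx: "- x \<in> S" using xS signvecs_neg S_def by auto
    show ?thesis
    proof (cases "x \<in> W")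
      case True
      hence a: "linf_norm (A *v x) = A $ i \<bullet> x" using Wmem by auto
      show ?thesis
      proof (cases "- x \<in> W")
        case True
        hence "linf_norm (A *v x) = - (A $ i \<bullet> x)" using Wmem linf_neg[of A x] by auto
        hence "linf_norm (A *v x) = 0" using a by simp
        moreover have "linf_norm (B *v x) \<ge> 0" using Bi by linarith
        ultimately show ?thesis using True \<open>x \<in> W\<close> unfolding h_def dn by simp
      next
        case False
        have "d x = u \<bullet> x - A $ i \<bullet> x" unfolding d_def by (simp add: inner_diff_left)
        then show ?thesis using False True a Bi unfolding h_def by auto
      qed
    next
      case False
      show ?thesis
      proof (cases "- x \<in> W")
        case True
        hence a: "linf_norm (A *v x) = - (A $ i \<bullet> x)" using Wmem linf_neg[of A x] by auto
        have "d (- x) = - (u \<bullet> x) + A $ i \<bullet> x" unfolding d_def by (simp add: inner_diff_left)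
        then show ?thesis using False True a Bi unfolding h_def by auto
      next
        case False2: False
        obtain k where k: "linf_norm (A *v x) = \<bar>(A *v x) $ k\<bar>" using linf_ex by blast
        have "k \<noteq> i"
        proof
          assume "k = i"
          hence "linf_norm (A *v x) = \<bar>A $ i \<bullet> x\<bar>" using k by (simp add: matrix_vector_mul_component)
          then have "linf_norm (A *v x) = A $ i \<bullet> x \<or> linf_norm (A *v (-x)) = A $ i \<bullet> (-x)"
            using linf_neg[of A x] by (auto simp: abs_if split: if_splits)
          then show False using False False2 Wmem xS nx by auto
        qed
        hence "linf_norm (B *v x) \<ge> linf_norm (A *v x)"
          using linf_ge[of "B *v x" k] k by (simp add: Bcomp)
        then show ?thesis using False False2 unfolding h_def by simp
      qed
    qed
  qed
  have sumh: "(\<Sum>x\<in>S. h x) = 2 * (\<Sum>x\<in>W. d x)"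
  proof -
    have 1: "(\<Sum>x\<in>S. if x \<in> W then d x else 0) = (\<Sum>x\<in>W. d x)"
      using finS WS by (simp add: sum.If_cases Int_absorb1 Int_absorb2)
    have "(\<Sum>x\<in>S. if - x \<in> W then d (- x) else 0) = (\<Sum>x\<in>S. if x \<in> W then d x else 0)"
      unfolding S_def by (rule sum_neg_reindex[where f="\<lambda>x. if x \<in> W then d x else 0"])
    then show ?thesis using 1 unfolding h_def by (simp add: sum.distrib)
  qed
  have "(\<Sum>x\<in>S. h x) \<le> (\<Sum>x\<in>S. linf_norm (B *v x) - linf_norm (A *v x))"
    by (rule sum_mono) (use key in auto)
  also have "\<dots> = (\<Sum>x\<in>S. linf_norm (B *v x)) - (\<Sum>x\<in>S. linf_norm (A *v x))"
    by (simp add: sum_subtractf)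
  also have "\<dots> \<le> 0"
  proof -
    have "beta B \<le> beta A" using maxim rowsB by blast
    then show ?thesis unfolding beta_def S_def by (simp add: divide_le_cancel)
  qed
  finally have "(\<Sum>x\<in>W. d x) \<le> 0" using sumh by simp
  moreover have "(\<Sum>x\<in>W. d x) = (u - A $ i) \<bullet> s"
    unfolding d_def s_def W_def by (simp add: inner_sum_right)
  ultimately have "u \<bullet> s \<le> A $ i \<bullet> s" by (simp add: inner_diff_left)
  moreover have "u \<bullet> s = norm s" unfolding u_def using sn
    by (simp add: inner_commute power2_norm_eq_inner[symmetric] power2_eq_square)
  ultimately have ge: "norm s \<le> A $ i \<bullet> s" by simp
  have "A $ i \<bullet> u \<ge> 1" using ge sn unfolding u_def by (simp add: field_simps)
  moreover have "A $ i \<bullet> A $ i = 1" "u \<bullet> u = 1" using rows nu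
    by (simp_all add: power2_norm_eq_inner[symmetric])
  ultimately have "norm (A $ i - u)^2 \<le> 0"
    by (simp add: power2_norm_eq_inner inner_diff_left inner_diff_right inner_commute)
  hence "A $ i = u" by simp
  then show ?thesis unfolding u_def s_def .
qed

end
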